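(* Let $X$ be a one-sided subshift with $\sigma(X)=X$ such that $Sp_l(X,\sigma)$ is finite and contains no periodic point of $\sigma$. Then for every $x\in Sp_l(X,\sigma)$, the point $\imath(x)$ is an isolated point of $\widetilde{X}$.
   Context: $X\subseteq\mathcal{A}^{\mathbb{N}}$ is a closed shift-invariant set over a finite alphabet $\mathcal{A}$, $\sigma$ the left shift; $Sp_l(X,\sigma)=\{x\in X: |\sigma^{-1}(\{x\})|\ge2\}$; $x$ is periodic if $\sigma^n(x)=x$ for some $n\ge1$. The cover: for $x\in X$ and $l\ge0$ let $P_l(x)=\{\mu\in\mathcal{L}(X): |\mu|=l,\ \mu x\in X\}$. Let $\mathcal{I}=\{(k,l)\in\mathbb{N}^2: k\le l\}$, ordered by $(k,l)\preceq(k',l')$ iff $k\le k'$ and $l-k\le l'-k'$. For $(k,l)\in\mathcal{I}$ write $x\overset{k,l}{\sim}y$ iff $x_{[0,k)}=y_{[0,k)}$ and $P_l(\sigma^k(x))=P_l(\sigma^k(y))$; let ${}_kX_l=X/\overset{k,l}{\sim}$ (finite, discrete) with classes ${}_k[x]_l$. $\widetilde{X}$ is the projective limit of $({}_kX_l)_{(k,l)\in\mathcal{I}}$ under the maps ${}_{k'}[x]_{l'}\mapsto{}_k[x]_l$ for $(k,l)\preceq(k',l')$, with the projective limit topology. The shift $\sigma_{\widetilde{X}}(\tilde{x})_{(k,l)}={}_k[\sigma(z)]_l$ with $z$ any representative of $\tilde{x}_{(k+1,l+1)}$; $\imath(x)=({}_k[x]_l)_{(k,l)\in\mathcal{I}}$.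 *)

theory Defs
  imports "HOL-Analysis.Analysis"
begin

text \<open>One-sided sequences over a finite alphabet 'a (the type 'a :: finite plays the role of A).\<close>

definition shift :: "(nat \<Rightarrow> 'a) \<Rightarrow> (nat \<Rightarrow> 'a)" where
  "shift x = (\<lambda>n. x (Suc n))"

definition seq_top :: "(nat \<Rightarrow> 'a) topology" where
  "seq_top = product_topology (\<lambda>_. discrete_topology UNIV) UNIV"

definition subshift :: "(nat \<Rightarrow> 'a::finite) set \<Rightarrow> bool" where
  "subshift X \<longleftrightarrow> closedin seq_top X \<and> shift ` X \<subseteq> X"

definition Sp_l :: "(nat \<Rightarrow> 'a) set \<Rightarrow> (nat \<Rightarrow> 'a) set" where
  "Sp_l X = {x \<in> X. 2 \<le> card {y \<in> X. shift y = x} \<or> infinite {y \<in> X. shift y = x}}"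

definition periodic_pt :: "(nat \<Rightarrow> 'a) \<Rightarrow> bool" where
  "periodic_pt x \<longleftrightarrow> (\<exists>n\<ge>1. (shift ^^ n) x = x)"

definition conc :: "'a list \<Rightarrow> (nat \<Rightarrow> 'a) \<Rightarrow> (nat \<Rightarrow> 'a)" where
  "conc \<mu> x = (\<lambda>n. if n < length \<mu> then \<mu> ! n else x (n - length \<mu>))"

definition lang :: "(nat \<Rightarrow> 'a) set \<Rightarrow> 'a list set" where
  "lang X = {w. \<exists>x\<in>X. \<exists>i. w = map x [i..<i + length w]}"

definition P_set :: "(nat \<Rightarrow> 'a) set \<Rightarrow> nat \<Rightarrow> (nat \<Rightarrow> 'a) \<Rightarrow> 'a list set" where
  "P_set X l x = {\<mu> \<in> lang X. length \<mu> = l \<and> conc \<mu> x \<in> X}"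

definition Iset :: "(nat \<times> nat) set" where
  "Iset = {(k, l). k \<le> l}"

definition Ile :: "nat \<times> nat \<Rightarrow> nat \<times> nat \<Rightarrow> bool" where
  "Ile p q \<longleftrightarrow> fst p \<le> fst q \<and> snd p - fst p \<le> snd q - fst q"

definition kl_equiv :: "(nat \<Rightarrow> 'a) set \<Rightarrow> nat \<Rightarrow> nat \<Rightarrow> (nat \<Rightarrow> 'a) \<Rightarrow> (nat \<Rightarrow> 'a) \<Rightarrow> bool" where
  "kl_equiv X k l x y \<longleftrightarrow> (\<forall>i<k. x i = y i) \<and>
      P_set X l ((shift ^^ k) x) = P_set X l ((shift ^^ k) y)"

definition kl_class :: "(nat \<Rightarrow> 'a) set \<Rightarrow> nat \<Rightarrow> nat \<Rightarrow> (nat \<Rightarrow> 'a) \<Rightarrow> (nat \<Rightarrow> 'a) set" where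
  "kl_class X k l x = {y \<in> X. kl_equiv X k l x y}"

definition kXl :: "(nat \<Rightarrow> 'a) set \<Rightarrow> nat \<Rightarrow> nat \<Rightarrow> (nat \<Rightarrow> 'a) set set" where
  "kXl X k l = kl_class X k l ` X"

definition bond :: "(nat \<Rightarrow> 'a) set \<Rightarrow> nat \<Rightarrow> nat \<Rightarrow> (nat \<Rightarrow> 'a) set \<Rightarrow> (nat \<Rightarrow> 'a) set" where
  "bond X k l C = kl_class X k l (SOME z. z \<in> C)"

text \<open>The projective limit \<open>X~\<close>: compatible families indexed by I (functions undefined off I).\<close>
definition Xtilde :: "(nat \<Rightarrow> 'a) set \<Rightarrow> (nat \<times> nat \<Rightarrow> (nat \<Rightarrow> 'a) set) set" where
  "Xtilde X = {xt \<in> (\<Pi>\<^sub>E (k, l)\<in>Iset. kXl X k l).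
      \<forall>p\<in>Iset. \<forall>q\<in>Iset. Ile p q \<longrightarrow> xt p = bond X (fst p) (snd p) (xt q)}"

definition Xtilde_top :: "(nat \<Rightarrow> 'a) set \<Rightarrow> (nat \<times> nat \<Rightarrow> (nat \<Rightarrow> 'a) set) topology" where
  "Xtilde_top X = subtopology
      (product_topology (\<lambda>(k, l). discrete_topology (kXl X k l)) Iset) (Xtilde X)"

definition iota :: "(nat \<Rightarrow> 'a) set \<Rightarrow> (nat \<Rightarrow> 'a) \<Rightarrow> (nat \<times> nat \<Rightarrow> (nat \<Rightarrow> 'a) set)" where
  "iota X x = (\<lambda>p\<in>Iset. kl_class X (fst p) (snd p) x)"

end

theory Submission
  imports Defs
begin

lemma shift_pow: "(shift ^^ n) u = (\<lambda>i. u (i + n))"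
  by (induction n arbitrary: u) (auto simp: shift_def funpow_Suc_right)

lemma shift_pow_in: "shift ` X \<subseteq> X \<Longrightarrow> v \<in> X \<Longrightarrow> (shift ^^ n) v \<in> X"
  by (induction n) auto

lemma surj_pow: "shift ` X = X \<Longrightarrow> z \<in> X \<Longrightarrow> \<exists>u\<in>X. (shift ^^ n) u = z"
proof (induction n arbitrary: z)
  case 0 then show ?case by auto
next
  case (Suc n)
  then obtain v where v: "v \<in> X" "shift v = z" by (metis imageE)
  then obtain u where "u \<in> X" "(shift ^^ n) u = v" using Suc by blast
  then show ?case using v by (intro bexI[of _ u]) auto
qed

lemma conc_decomp: "u = conc (map u [0..<n]) ((shift ^^ n) u)"
  by (auto simp: conc_def shift_pow)

lemma conc_append: "conc (a @ b) z = conc a (conc b z)"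
  by (rule ext) (auto simp: conc_def nth_append)

lemma shift_conc: "(shift ^^ (length \<nu>)) (conc \<nu> z) = z"
  by (rule ext) (auto simp: conc_def shift_pow)

lemma conc_lang: "conc \<mu> z \<in> X \<Longrightarrow> \<mu> \<in> lang X"
  unfolding lang_def
  apply (rule CollectI, rule bexI[of _ "conc \<mu> z"], rule exI[of _ 0])
  by (auto intro!: nth_equalityI simp: conc_def)

lemma conc_mid: "k \<le> k' \<Longrightarrow> conc (\<mu> @ map v [k..<k']) ((shift ^^ k') v) = conc \<mu> ((shift ^^ k) v)"
  by (rule ext) (auto simp: conc_def nth_append shift_pow add.commute)

lemma P_sub:
  assumes surj: "shift ` X = X"
    and sub: "P_set X l' ((shift ^^ k') x) \<subseteq> P_set X l' ((shift ^^ k') y)"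
    and agree: "\<forall>i<k'. x i = y i"
    and kk: "k \<le> k'" "l - k \<le> l' - k'" "k \<le> l" "k' \<le> l'"
  shows "P_set X l ((shift ^^ k) x) \<subseteq> P_set X l ((shift ^^ k) y)"
proof
  fix \<mu> assume "\<mu> \<in> P_set X l ((shift ^^ k) x)"
  then have len: "length \<mu> = l" and mx: "conc \<mu> ((shift ^^ k) x) \<in> X"
    by (auto simp: P_set_def)
  define w where "w = \<mu> @ map x [k..<k']"
  have w1: "conc w ((shift ^^ k') x) = conc \<mu> ((shift ^^ k) x)"
    unfolding w_def using kk conc_mid by blast
  have lw: "length w = l + (k' - k)" using len kk by (simp add: w_def)
  define n where "n = l' - length w"
  obtain u where u: "u \<in> X" "(shift ^^ n) u = conc w ((shift ^^ k') x)"
    using surj_pow[OF surj, of "conc w ((shift ^^ k') x)" n] w1 mx by auto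
  define \<nu> where "\<nu> = map u [0..<n]"
  have "conc (\<nu> @ w) ((shift ^^ k') x) = u"
    unfolding conc_append \<nu>_def using u conc_decomp[of u n] by simp
  moreover have "length (\<nu> @ w) = l'" using lw kk by (simp add: \<nu>_def n_def)
  ultimately have "\<nu> @ w \<in> P_set X l' ((shift ^^ k') x)"
    using u conc_lang by (auto simp: P_set_def)
  with sub have "conc (\<nu> @ w) ((shift ^^ k') y) \<in> X" by (auto simp: P_set_def)
  then have "(shift ^^ length \<nu>) (conc (\<nu> @ w) ((shift ^^ k') y)) \<in> X"
    using shift_pow_in surj by blast
  then have "conc w ((shift ^^ k') y) \<in> X"
    unfolding conc_append shift_conc .
  moreover have "map x [k..<k'] = map y [k..<k']" using agree by auto
  ultimately have "conc \<mu> ((shift ^^ k) y) \<in> X"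
    unfolding w_def using conc_mid[OF kk(1), of \<mu> y] by simp
  then show "\<mu> \<in> P_set X l ((shift ^^ k) y)"
    using len conc_lang by (auto simp: P_set_def)
qed

lemma refine:
  assumes surj: "shift ` X = X"
    and eq: "kl_equiv X k' l' x y"
    and kk: "k \<le> k'" "l - k \<le> l' - k'" "k \<le> l" "k' \<le> l'"
  shows "kl_equiv X k l x y"
proof -
  have a: "\<forall>i<k'. x i = y i" and p: "P_set X l' ((shift ^^ k') x) = P_set X l' ((shift ^^ k') y)"
    using eq by (auto simp: kl_equiv_def)
  have "P_set X l ((shift ^^ k) x) \<subseteq> P_set X l ((shift ^^ k) y)"
    using P_sub[OF surj _ a kk] p by simp
  moreover have "P_set X l ((shift ^^ k) y) \<subseteq> P_set X l ((shift ^^ k) x)"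
    using P_sub[OF surj _ _ kk, of y x] p a by simp
  ultimately show ?thesis using a kk by (auto simp: kl_equiv_def)
qed

lemma class_eq: "kl_equiv X k l a b \<Longrightarrow> kl_class X k l a = kl_class X k l b"
  by (auto simp: kl_class_def kl_equiv_def)

lemma bond_class:
  assumes surj: "shift ` X = X" and z: "z \<in> X"
    and kk: "k \<le> k'" "l - k \<le> l' - k'" "k \<le> l" "k' \<le> l'"
  shows "bond X k l (kl_class X k' l' z) = kl_class X k l z"
proof -
  have zin: "z \<in> kl_class X k' l' z" using z by (auto simp: kl_class_def kl_equiv_def)
  define w where "w = (SOME w. w \<in> kl_class X k' l' z)"
  have "w \<in> kl_class X k' l' z" unfolding w_def using someI[of "\<lambda>w. w \<in> kl_class X k' l' z" z] zin by simp
  then have "kl_equiv X k' l' z w" by (auto simp: kl_class_def)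
  then have "kl_equiv X k l z w" using refine[OF surj _ kk] by blast
  then show ?thesis unfolding bond_def w_def[symmetric] using class_eq by metis
qed

lemma Sp_l_D:
  assumes "x \<in> Sp_l X"
  shows "\<exists>a b. a \<noteq> b \<and> conc [a] x \<in> X \<and> conc [b] x \<in> X"
proof -
  let ?Y = "{y \<in> X. shift y = x}"
  have "\<exists>y1\<in>?Y. \<exists>y2\<in>?Y. y1 \<noteq> y2"
  proof (rule ccontr)
    assume "\<not> ?thesis"
    then have s': "?Y \<subseteq> {SOME y. y \<in> ?Y}" by (metis (no_types, lifting) singletonI someI subsetI)
    have "finite ?Y" by (rule finite_subset[OF s']) simp
    moreover have "card ?Y \<le> 1" using card_mono[OF _ s'] by simp
    ultimately have "finite ?Y" "card ?Y \<le> 1" by auto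
    then show False using assms by (auto simp: Sp_l_def)
  qed
  then obtain y1 y2 where y: "y1 \<in> X" "y2 \<in> X" "shift y1 = x" "shift y2 = x" "y1 \<noteq> y2" by auto
  have e: "y = conc [y 0] x" if "shift y = x" for y
    using that by (auto simp: conc_def shift_def fun_eq_iff) (metis Suc_pred)
  have "y1 0 \<noteq> y2 0" using y e by metis
  then show ?thesis using y e by metis
qed

lemma shift_conc1: "shift (conc [a] y) = y"
  by (auto simp: conc_def shift_def)

lemma Sp_l_I:
  assumes "y \<in> X" "a \<noteq> b" "conc [a] y \<in> X" "conc [b] y \<in> X"
  shows "y \<in> Sp_l X"
proof -
  let ?Y = "{z \<in> X. shift z = y}"
  have d: "conc [a] y \<noteq> conc [b] y" using assms(2) by (auto simp: conc_def fun_eq_iff)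
  have s: "{conc [a] y, conc [b] y} \<subseteq> ?Y" using assms shift_conc1 by auto
  have "finite ?Y \<Longrightarrow> 2 \<le> card ?Y"
    using card_mono[OF _ s] d by simp
  then show ?thesis using assms(1) by (auto simp: Sp_l_def)
qed

lemma conc_front: "\<forall>i<k. x i = z i \<Longrightarrow> conc (a # map x [0..<k]) ((shift ^^ k) z) = conc [a] z"
  by (rule ext) (auto simp: conc_def shift_pow nth_Cons split: nat.split)

lemma key:
  assumes x: "x \<in> Sp_l X" and z: "z \<in> X" and eq: "kl_equiv X k (Suc k) x z"
  shows "z \<in> Sp_l X"
proof -
  obtain a b where ab: "a \<noteq> b" "conc [a] x \<in> X" "conc [b] x \<in> X" using Sp_l_D[OF x] by blast
  have ag: "\<forall>i<k. x i = z i" and p: "P_set X (Suc k) ((shift ^^ k) x) = P_set X (Suc k) ((shift ^^ k) z)"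
    using eq by (auto simp: kl_equiv_def)
  have "conc [c] z \<in> X" if c: "conc [c] x \<in> X" for c
  proof -
    have "c # map x [0..<k] \<in> P_set X (Suc k) ((shift ^^ k) x)"
    proof -
      have "conc (c # map x [0..<k]) ((shift ^^ k) x) \<in> X" using c conc_front[of k x x c] by simp
      then show ?thesis using conc_lang[of "c # map x [0..<k]" "(shift ^^ k) x" X] by (auto simp: P_set_def)
    qed
    then have "c # map x [0..<k] \<in> P_set X (Suc k) ((shift ^^ k) z)" using p by (simp only:)
    then have "conc (c # map x [0..<k]) ((shift ^^ k) z) \<in> X" unfolding P_set_def by blast
    then show ?thesis using conc_front[OF ag] by simp
  qed
  then show ?thesis using Sp_l_I[OF z ab(1)] ab by blast
qed

lemma finite_sep: "finite S \<Longrightarrow> (\<forall>y\<in>S. \<exists>n. P y n) \<Longrightarrow> \<exists>k. \<forall>y\<in>S. \<exists>n<(k::nat). P y n"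
proof (induction S rule: finite_induct)
  case empty then show ?case by auto
next
  case (insert y S)
  have "\<forall>y\<in>S. \<exists>n. P y n" using insert.prems by blast
  then obtain k where k: "\<forall>y\<in>S. \<exists>n<k. P y n" using insert.IH by blast
  obtain m where "P y m" using insert.prems by blast
  have "\<forall>z\<in>insert y S. \<exists>n<max k (Suc m). P z n"
  proof
    fix z assume "z \<in> insert y S"
    then show "\<exists>n<max k (Suc m). P z n"
    proof
      assume "z = y" then show ?thesis using \<open>P y m\<close> by (intro exI[of _ m]) simp
    next
      assume "z \<in> S" then obtain n where "n < k" "P z n" using k by blast
      then show ?thesis by (intro exI[of _ n]) simp
    qed
  qed
  then show ?case by blast
qed

theorem proposition3p4:
  fixes X :: "(nat \<Rightarrow> 'a::finite) set"
  assumes "subshift X"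
    and "shift ` X = X"
    and "finite (Sp_l X)"
    and "\<forall>x\<in>Sp_l X. \<not> periodic_pt x"
    and "x \<in> Sp_l X"
  shows "openin (Xtilde_top X) {iota X x}"
proof -
  note surj = assms(2)
  have xX: "x \<in> X" using assms(5) by (auto simp: Sp_l_def)
  have "\<forall>y\<in>Sp_l X - {x}. \<exists>n. y n \<noteq> x n" by (auto simp: fun_eq_iff)
  then obtain k where k: "\<forall>y\<in>Sp_l X - {x}. \<exists>n<k. y n \<noteq> x n"
    using finite_sep[of "Sp_l X - {x}" "\<lambda>y n. y n \<noteq> x n"] assms(3) finite_Diff by blast
  define p0 where "p0 = (k, Suc k)"
  define c where "c = kl_class X k (Suc k) x"
  let ?T = "product_topology (\<lambda>(k, l). discrete_topology (kXl X k l)) Iset"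
  define T where "T = {f \<in> topspace ?T. f p0 \<in> {c}}"
  have p0I: "p0 \<in> Iset" by (simp add: p0_def Iset_def)
  have cin: "c \<in> kXl X k (Suc k)" using xX by (simp add: c_def kXl_def)
  have "openin ?T T" unfolding T_def
    apply (rule openin_continuous_map_preimage[where Y="discrete_topology (kXl X k (Suc k))"])
    using continuous_map_product_projection[OF p0I, of "\<lambda>(k, l). discrete_topology (kXl X k l)"]
    by (auto simp: p0_def cin)
  have iotaPi: "iota X x \<in> (\<Pi>\<^sub>E (k, l)\<in>Iset. kXl X k l)"
    using xX by (auto simp: iota_def kXl_def)
  have iotaX: "iota X x \<in> Xtilde X"
    unfolding Xtilde_def using iotaPi
    by (auto simp: iota_def Iset_def Ile_def bond_class[OF surj xX])
  have "{iota X x} = T \<inter> Xtilde X"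
  proof
    show "{iota X x} \<subseteq> T \<inter> Xtilde X"
      using iotaX iotaPi p0I xX by (auto simp: T_def topspace_product_topology iota_def c_def p0_def kXl_def)
  next
    show "T \<inter> Xtilde X \<subseteq> {iota X x}"
    proof
      fix xt assume xt: "xt \<in> T \<inter> Xtilde X"
      then have Pi: "xt \<in> (\<Pi>\<^sub>E (k, l)\<in>Iset. kXl X k l)"
        and comp: "\<And>p q. p \<in> Iset \<Longrightarrow> q \<in> Iset \<Longrightarrow> Ile p q \<Longrightarrow> xt p = bond X (fst p) (snd p) (xt q)"
        and xp0: "xt p0 = c"
        by (auto simp: Xtilde_def T_def)
      have "xt q = iota X x q" for q
      proof (cases "q \<in> Iset")
        case False then show ?thesis using Pi by (auto simp: iota_def)
      next
        case True
        obtain a b where q: "q = (a, b)" "a \<le> b" using True by (auto simp: Iset_def)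
        define r where "r = (max k a, max k a + max 1 (b - a))"
        have rI: "r \<in> Iset" by (simp add: r_def Iset_def)
        have "xt r \<in> (\<lambda>(k, l). kXl X k l) r" using Pi rI by (rule PiE_mem)
        then have "xt r \<in> kXl X (fst r) (snd r)" by (simp add: case_prod_beta)
        then obtain z where z: "z \<in> X" "xt r = kl_class X (fst r) (snd r) z"
          unfolding kXl_def by blast
        have rr: "k \<le> fst r" "Suc k - k \<le> snd r - fst r" "k \<le> Suc k" "fst r \<le> snd r"
          by (auto simp: r_def)
        have "Ile p0 r" using rr by (simp add: Ile_def p0_def)
        then have "xt p0 = bond X k (Suc k) (xt r)" using comp[OF p0I rI] by (simp add: p0_def)
        also have "\<dots> = kl_class X k (Suc k) z" using z(2) bond_class[OF surj z(1) rr] by simp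
        finally have "kl_class X k (Suc k) z = c" using xp0 by simp
        then have "z \<in> kl_class X k (Suc k) x"
          using z(1) by (auto simp: c_def kl_class_def kl_equiv_def)
        then have eqz: "kl_equiv X k (Suc k) x z" by (auto simp: kl_class_def)
        then have zS: "z \<in> Sp_l X" using key[OF assms(5) z(1)] by blast
        have ag: "\<forall>i<k. z i = x i" using eqz by (auto simp: kl_equiv_def)
        have "z = x"
        proof (rule ccontr)
          assume "z \<noteq> x"
          then have "z \<in> Sp_l X - {x}" using zS by simp
          then obtain n where "n < k" "z n \<noteq> x n" using k by blast
          then show False using ag by simp
        qed
        have qq: "a \<le> fst r" "b - a \<le> snd r - fst r" "a \<le> b" "fst r \<le> snd r"
          using q by (auto simp: r_def)
        have "Ile q r" using qq q by (simp add: Ile_def)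
        then have "xt q = bond X a b (xt r)" using comp[OF True rI] q by simp
        also have "\<dots> = kl_class X a b x"
          using bond_class[OF surj xX qq] z(2) \<open>z = x\<close> by simp
        finally show ?thesis using True q by (simp add: iota_def)
      qed
      then show "xt \<in> {iota X x}" by auto
    qed
  qed
  then show ?thesis unfolding Xtilde_top_def openin_subtopology
    using \<open>openin ?T T\<close> by blast
qed

end
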